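(* Fix an integer $n$. Let $A=\mathbb Z[t_1^{\pm1},t_3^{\pm1}]$ regarded as a free abelian group on the monomials $t_1^\alpha t_3^\beta$, and let $K\subset A$ be the subgroup generated by the elements $$t_1^{\alpha-\beta}t_3^{-\beta}-t_1^{\alpha}t_3^{\alpha-\beta}+(-1)^{n-1}\big(t_1^{\beta}t_3^{\beta-\alpha}-t_1^{\beta-\alpha}t_3^{-\alpha}\big),\qquad \alpha,\beta\in\mathbb Z.$$ Then $A/K$ is isomorphic to the direct sum of a free abelian group and an abelian group in which every element has order at most $2$. *)

theory Defs
  imports "HOL-Algebra.Free_Abelian_Groups"
begin

text \<open>The Laurent polynomial ring Z[t1^{+-1}, t3^{+-1}] as a free abelian group on the
  monomials; the monomial t1^a t3^b corresponds to the basis element frag_of (a, b).\<close>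
definition LaurentA :: "(int \<times> int \<Rightarrow>\<^sub>0 int) monoid" where
  "LaurentA = free_Abelian_group UNIV"

definition Kgen :: "int \<Rightarrow> int \<Rightarrow> int \<Rightarrow> (int \<times> int \<Rightarrow>\<^sub>0 int)" where
  "Kgen n \<alpha> \<beta> =
     frag_of (\<alpha> - \<beta>, - \<beta>) - frag_of (\<alpha>, \<alpha> - \<beta>)
     + frag_cmul (if odd n then 1 else -1)
         (frag_of (\<beta>, \<beta> - \<alpha>) - frag_of (\<beta> - \<alpha>, - \<alpha>))"

definition Ksub :: "int \<Rightarrow> (int \<times> int \<Rightarrow>\<^sub>0 int) set" where
  "Ksub n = generate LaurentA {Kgen n \<alpha> \<beta> | \<alpha> \<beta>. True}"

end

theory Submission
  imports Defs
begin


definition sg :: "int \<Rightarrow> int" where "sg n = (if odd n then 1 else -1)"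

lemma LaurentA_group: "group LaurentA" by (simp add: LaurentA_def)
lemma carrier_LaurentA [simp]: "carrier LaurentA = UNIV" by (auto simp: LaurentA_def)

lemma Ksub_subgroup: "subgroup (Ksub n) LaurentA"
  unfolding Ksub_def by (rule group.generate_is_subgroup[OF LaurentA_group]) simp

lemma K_zero: "0 \<in> Ksub n"
  using subgroup.one_closed[OF Ksub_subgroup[of n]] by (simp add: LaurentA_def)

lemma K_add: "x \<in> Ksub n \<Longrightarrow> y \<in> Ksub n \<Longrightarrow> x + y \<in> Ksub n"
  using subgroup.m_closed[OF Ksub_subgroup[of n]] by (simp add: LaurentA_def)

lemma K_uminus: "x \<in> Ksub n \<Longrightarrow> - x \<in> Ksub n"
  using subgroup.m_inv_closed[OF Ksub_subgroup[of n]] by (simp add: LaurentA_def)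

lemma K_diff: "x \<in> Ksub n \<Longrightarrow> y \<in> Ksub n \<Longrightarrow> x - y \<in> Ksub n"
  by (metis K_add K_uminus diff_conv_add_uminus)

lemma K_cmul: "x \<in> Ksub n \<Longrightarrow> frag_cmul k x \<in> Ksub n"
  by (rule frag_closure_minus_cmul[where P="\<lambda>x. x \<in> Ksub n"]) (auto intro: K_zero K_diff)

lemma K_gen: "Kgen n a b \<in> Ksub n"
  unfolding Ksub_def by (rule generate.incl) blast

lemma K_sum: "finite I \<Longrightarrow> (\<And>i. i \<in> I \<Longrightarrow> F i \<in> Ksub n) \<Longrightarrow> sum F I \<in> Ksub n"
  by (induction I rule: finite_induct) (auto intro: K_zero K_add)

lemma K_frag_extend: "(\<And>i. f i \<in> Ksub n) \<Longrightarrow> frag_extend f c \<in> Ksub n"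
  unfolding frag_extend_def by (auto intro!: K_sum K_cmul)



type_synonym pt = "int \<times> int"

definition Mm :: "pt \<Rightarrow> pt" where "Mm p = (fst p - snd p, fst p)"
definition Rr :: "pt \<Rightarrow> pt" where "Rr p = (- snd p, - fst p)"
definition sm :: "pt \<Rightarrow> int" where "sm p = fst p + snd p"
definition Lt :: "pt \<Rightarrow> bool" where
  "Lt p = (sm p * (2*fst p - snd p) * (fst p - 2*snd p) = 0)"
definition Dg :: "pt \<Rightarrow> bool" where
  "Dg p = (\<not> Lt p \<and> fst p * snd p * (fst p - snd p) = 0)"
definition Qf :: "pt \<Rightarrow> int" where
  "Qf p = sm p * (2*fst p - snd p) * (fst p - 2*snd p) * (fst p * snd p * (fst p - snd p))"

definition Dorb :: "pt \<Rightarrow> pt set" where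
  "Dorb p = (case p of (a,b) \<Rightarrow>
     {(a,b),(a-b,a),(-b,a-b),(-a,-b),(b-a,-a),(b,b-a),
      (-b,-a),(-a,b-a),(b-a,b),(b,a),(a,a-b),(a-b,-b)})"

lemma Mm_simp: "Mm (a,b) = (a-b,a)" by (simp add: Mm_def)
lemma Rr_simp: "Rr (a,b) = (-b,-a)" by (simp add: Rr_def)
lemma Rr_Rr [simp]: "Rr (Rr p) = p" by (simp add: Rr_def)

lemma Dorb_self: "p \<in> Dorb p" by (cases p) (simp add: Dorb_def)

lemma Dorb_M: "Dorb (Mm p) = Dorb p"
  by (cases p) (auto simp: Dorb_def Mm_simp Rr_simp)

lemma Dorb_R: "Dorb (Rr p) = Dorb p"
  by (cases p) (auto simp: Dorb_def Mm_simp Rr_simp)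


definition Morb :: "pt \<Rightarrow> pt set" where
  "Morb p = {p, Mm p, Mm (Mm p), Mm (Mm (Mm p)), Mm (Mm (Mm (Mm p))), Mm (Mm (Mm (Mm (Mm p))))}"

lemma Dorb_Morb: "Dorb p = Morb p \<union> Rr ` Morb p"
  by (cases p) (simp add: Dorb_def Morb_def insert_commute Mm_simp Rr_simp)

lemma Dorb_mem: assumes "q \<in> Dorb p" shows "Dorb q = Dorb p"
proof -
  have "q = p \<or> q = Mm p \<or> q = Mm (Mm p) \<or> q = Mm (Mm (Mm p)) \<or> q = Mm (Mm (Mm (Mm p)))
    \<or> q = Mm (Mm (Mm (Mm (Mm p)))) \<or> q = Rr p \<or> q = Rr (Mm p) \<or> q = Rr (Mm (Mm p))
    \<or> q = Rr (Mm (Mm (Mm p))) \<or> q = Rr (Mm (Mm (Mm (Mm p)))) \<or> q = Rr (Mm (Mm (Mm (Mm (Mm p)))))"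
    using assms unfolding Dorb_Morb[of p] Morb_def by blast
  then show ?thesis by (elim disjE) (simp_all add: Dorb_M Dorb_R)
qed

lemma Morb_induct:
  assumes "q \<in> Morb p" "P p" "\<And>x. P x \<Longrightarrow> P (Mm x)"
  shows "P q"
proof -
  have "q = p \<or> q = Mm p \<or> q = Mm (Mm p) \<or> q = Mm (Mm (Mm p)) \<or> q = Mm (Mm (Mm (Mm p)))
    \<or> q = Mm (Mm (Mm (Mm (Mm p))))" using assms(1) unfolding Morb_def by blast
  then show ?thesis by (elim disjE) (simp_all add: assms(2,3))
qed

lemma Lt_M: "Lt (Mm p) = Lt p"
  by (cases p) (auto simp: Lt_def sm_def algebra_simps Mm_simp Rr_simp)
lemma Lt_R: "Lt (Rr p) = Lt p"
  by (cases p) (auto simp: Lt_def sm_def algebra_simps Mm_simp Rr_simp)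
lemma Dg_M: "Dg (Mm p) = Dg p"
  by (cases p) (auto simp: Dg_def Lt_def sm_def Mm_simp algebra_simps)
lemma Dg_R: "Dg (Rr p) = Dg p"
  by (cases p) (auto simp: Dg_def Lt_def sm_def Rr_simp algebra_simps)
lemma Qf_M: "Qf (Mm p) = Qf p"
  by (cases p) (simp add: Qf_def sm_def Mm_simp algebra_simps)
lemma Qf_R: "Qf (Rr p) = - Qf p"
  by (cases p) (simp add: Qf_def sm_def Rr_simp algebra_simps)
lemma sm_R: "sm (Rr p) = - sm p" by (simp add: sm_def Rr_def)
lemma Rr_fix: "sm p = 0 \<Longrightarrow> Rr p = p" by (cases p) (simp add: sm_def Rr_simp)

lemma free_iff: "Qf p \<noteq> 0 \<longleftrightarrow> \<not> Lt p \<and> \<not> Dg p"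
  by (auto simp: Qf_def Lt_def Dg_def)
lemma Lt_sm: "sm p = 0 \<Longrightarrow> Lt p" by (simp add: Lt_def)
lemma Dg_nz: "Dg p \<Longrightarrow> p \<noteq> (0,0)" by (auto simp: Dg_def Lt_def)

lemma Morb_props: "q \<in> Morb p \<Longrightarrow> Lt q = Lt p \<and> Dg q = Dg p \<and> Qf q = Qf p"
  by (rule Morb_induct[where P="\<lambda>q. Lt q = Lt p \<and> Dg q = Dg p \<and> Qf q = Qf p"])
     (auto simp: Lt_M Dg_M Qf_M)

lemma Dorb_props: "q \<in> Dorb p \<Longrightarrow> Lt q = Lt p \<and> Dg q = Dg p \<and>
   ((q \<in> Morb p \<and> Qf q = Qf p) \<or> (q \<in> Rr ` Morb p \<and> Qf q = - Qf p))"
proof -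
  assume "q \<in> Dorb p"
  then have "q \<in> Morb p \<or> (\<exists>x\<in>Morb p. q = Rr x)" unfolding Dorb_Morb by blast
  then show ?thesis
  proof
    assume "q \<in> Morb p" then show ?thesis using Morb_props by blast
  next
    assume "\<exists>x\<in>Morb p. q = Rr x"
    then obtain x where x: "x \<in> Morb p" "q = Rr x" by blast
    from Morb_props[OF x(1)] x show ?thesis by (simp add: Lt_R Dg_R Qf_R)
  qed
qed



definition h :: "int \<Rightarrow> pt \<Rightarrow> (pt \<Rightarrow>\<^sub>0 int)" where
  "h s p = frag_of p + frag_cmul s (frag_of (Rr p))"

lemma frag_cmul_diff_distrib2: "frag_cmul c (a - b) = frag_cmul c a - frag_cmul c b"
  by (rule poly_mapping_eqI) (simp add: lookup_minus algebra_simps)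

lemma sg_sq: "sg n * sg n = 1" by (simp add: sg_def)
lemma sg_cases: "sg n = 1 \<or> sg n = -1" by (simp add: sg_def)

lemma Kgen_h: "Kgen n \<alpha> \<beta> = h (sg n) (\<alpha>-\<beta>,-\<beta>) - h (sg n) (Mm (\<alpha>-\<beta>,-\<beta>))"
  by (rule poly_mapping_eqI)
     (simp add: Kgen_def h_def sg_def Mm_simp Rr_simp lookup_add lookup_minus)

lemma K_h: "h (sg n) v - h (sg n) (Mm v) \<in> Ksub n"
proof -
  obtain a b where v: "v = (a,b)" by (cases v)
  have "Kgen n (a - b) (- b) = h (sg n) v - h (sg n) (Mm v)"
    using Kgen_h[of n "a-b" "-b"] v by simp
  then show ?thesis using K_gen by metis
qed

lemma h_R: "h (sg n) (Rr v) = frag_cmul (sg n) (h (sg n) v)"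
  by (rule poly_mapping_eqI) (auto simp: h_def sg_def lookup_add)

lemma K_h_Morb: assumes "q \<in> Morb p" shows "h (sg n) q - h (sg n) p \<in> Ksub n"
  using assms
proof (rule Morb_induct)
  show "h (sg n) p - h (sg n) p \<in> Ksub n" by (simp add: K_zero)
next
  fix x assume "h (sg n) x - h (sg n) p \<in> Ksub n"
  moreover have "h (sg n) (Mm x) - h (sg n) x \<in> Ksub n"
    using K_uminus[OF K_h[of n x]] by simp
  ultimately show "h (sg n) (Mm x) - h (sg n) p \<in> Ksub n"
    using K_add by fastforce
qed

lemma K_h_Dorb: assumes "q \<in> Dorb p"
  shows "(Qf q = Qf p \<and> h (sg n) q - h (sg n) p \<in> Ksub n) \<or>
         (Qf q = - Qf p \<and> h (sg n) q - frag_cmul (sg n) (h (sg n) p) \<in> Ksub n)"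
proof -
  from Dorb_props[OF assms] have
    "(q \<in> Morb p \<and> Qf q = Qf p) \<or> (q \<in> Rr ` Morb p \<and> Qf q = - Qf p)" by blast
  then show ?thesis
  proof
    assume "q \<in> Morb p \<and> Qf q = Qf p" then show ?thesis using K_h_Morb by blast
  next
    assume a: "q \<in> Rr ` Morb p \<and> Qf q = - Qf p"
    then obtain x where x: "x \<in> Morb p" "q = Rr x" by blast
    have "frag_cmul (sg n) (h (sg n) x - h (sg n) p) \<in> Ksub n"
      by (rule K_cmul[OF K_h_Morb[OF x(1)]])
    then have "h (sg n) q - frag_cmul (sg n) (h (sg n) p) \<in> Ksub n"
      using x(2) by (simp add: h_R frag_cmul_diff_distrib2)
    then show ?thesis using a by blast
  qed
qed



definition tg :: "int \<Rightarrow> pt set \<Rightarrow> (pt \<Rightarrow>\<^sub>0 int) set" where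
  "tg k D = (\<lambda>p. frag_cmul k (frag_of p)) ` D"
definition pts :: "int \<Rightarrow> (pt \<Rightarrow>\<^sub>0 int) set \<Rightarrow> pt set" where
  "pts k b = {p. frag_cmul k (frag_of p) \<in> b}"

lemma cmul_frag_of_eq:
  assumes "k \<noteq> 0" "j \<noteq> 0"
  shows "frag_cmul k (frag_of p) = frag_cmul j (frag_of q) \<longleftrightarrow> k = j \<and> p = q"
proof
  assume "frag_cmul k (frag_of p) = frag_cmul j (frag_of q)"
  then have "Poly_Mapping.lookup (frag_cmul k (frag_of p)) p = Poly_Mapping.lookup (frag_cmul j (frag_of q)) p" by simp
  then have "k = (if p = q then j else 0)" by simp
  with assms show "k = j \<and> p = q" by (auto split: if_splits)
qed auto

lemma pts_tg: "k \<noteq> 0 \<Longrightarrow> j \<noteq> 0 \<Longrightarrow> pts k (tg j D) = (if k = j then D else {})"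
  by (auto simp: pts_def tg_def cmul_frag_of_eq)

definition gC :: "int \<Rightarrow> pt \<Rightarrow> ((pt \<Rightarrow>\<^sub>0 int) set \<Rightarrow>\<^sub>0 int)" where
  "gC s p = (if Lt p then (if s = 1 then frag_cmul (if sm p = 0 then 1 else 2) (frag_of (tg 2 (Dorb p)))
                           else (if sm p = 0 then frag_of (tg 3 {p}) else 0))
             else if Dg p then (if s = 1 then frag_of (tg 2 (Dorb p)) else 0)
             else frag_cmul (if Qf p > 0 then 1 else s) (frag_of (tg 2 (Dorb p))))"

definition g1 :: "int \<Rightarrow> pt \<Rightarrow> ((pt \<Rightarrow>\<^sub>0 int) set \<Rightarrow>\<^sub>0 int)" where
  "g1 s p = (if sm p > 0 then frag_of (tg 1 {p})
             else (if sm p < 0 then frag_cmul (-s) (frag_of (tg 1 {Rr p})) else 0) + gC s p)"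

definition cD :: "pt \<Rightarrow> int" where "cD p = max \<bar>fst p\<bar> \<bar>snd p\<bar>"

definition g2 :: "int \<Rightarrow> pt \<Rightarrow> ((pt \<Rightarrow>\<^sub>0 int) \<Rightarrow>\<^sub>0 int)" where
  "g2 s p = (if s = 1 then (if sm p = 0 \<and> fst p > 0 then frag_of (frag_of p) else 0)
             else (if sm p < 0 \<and> Dg p then frag_of (frag_of (cD p, cD p)) else 0))"

definition G1 :: "int \<Rightarrow> pt \<Rightarrow> ((pt \<Rightarrow>\<^sub>0 int) set \<Rightarrow>\<^sub>0 int)" where
  "G1 s v = (if Lt v then (if s = 1 then frag_cmul 2 (frag_of (tg 2 (Dorb v))) else 0)
             else if Dg v then (if s = 1 then frag_of (tg 2 (Dorb v)) else 0)
             else frag_cmul (if Qf v > 0 then 1 else s) (frag_of (tg 2 (Dorb v))))"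

definition G2 :: "int \<Rightarrow> pt \<Rightarrow> ((pt \<Rightarrow>\<^sub>0 int) \<Rightarrow>\<^sub>0 int)" where
  "G2 s v = (if s = 1 then 0 else if Dg v then frag_of (frag_of (cD v, cD v)) else 0)"

definition ev :: "('a \<Rightarrow>\<^sub>0 int) \<Rightarrow> bool" where "ev z = (\<forall>t. even (Poly_Mapping.lookup z t))"

lemma fe_h: "frag_extend f (h s v) = f v + frag_cmul s (f (Rr v))"
  by (simp add: h_def frag_extend_add frag_extend_cmul)

lemma G1_M: "G1 s (Mm v) = G1 s v"
  by (simp add: G1_def Lt_M Dg_M Qf_M Dorb_M)

lemma cD_M: "Dg v \<Longrightarrow> cD (Mm v) = cD v"
  by (cases v) (auto simp: Dg_def cD_def Mm_simp)

lemma G2_M: "G2 s (Mm v) = G2 s v"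
  by (simp add: G2_def Dg_M cD_M)

lemma A1: assumes s: "s = 1 \<or> s = -1"
  shows "frag_extend (g1 s) (h s v) = G1 s v"
proof -
  have R: "sm (Rr v) = - sm v" "Lt (Rr v) = Lt v" "Dg (Rr v) = Dg v" "Qf (Rr v) = - Qf v"
      "Dorb (Rr v) = Dorb v"
    by (simp_all add: sm_R Lt_R Dg_R Qf_R Dorb_R)
  have fr: "Qf v \<noteq> 0 \<longleftrightarrow> \<not> Lt v \<and> \<not> Dg v" by (rule free_iff)
  have L: "sm v = 0 \<Longrightarrow> Lt v" by (rule Lt_sm)
  show ?thesis unfolding fe_h
  proof (rule poly_mapping_eqI)
    fix x
    consider "sm v > 0" | "sm v < 0" | "sm v = 0" by linarith
    then show "Poly_Mapping.lookup (g1 s v + frag_cmul s (g1 s (Rr v))) x = Poly_Mapping.lookup (G1 s v) x"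
    proof cases
      case 1
      then show ?thesis using s R fr
        by (auto simp: g1_def gC_def G1_def lookup_add)
    next
      case 2
      then show ?thesis using s R fr
        by (auto simp: g1_def gC_def G1_def lookup_add)
    next
      case 3
      then show ?thesis using s R fr L Rr_fix[of v]
        by (auto simp: g1_def gC_def G1_def lookup_add)
    qed
  qed
qed

lemma ev_add: "ev a \<Longrightarrow> ev b \<Longrightarrow> ev (a + b)" by (simp add: ev_def lookup_add)
lemma ev_diff: "ev a \<Longrightarrow> ev b \<Longrightarrow> ev (a - b)" by (simp add: ev_def lookup_minus)

lemma A2: assumes s: "s = 1 \<or> s = -1"
  shows "ev (frag_extend (g2 s) (h s v) - G2 s v)"
proof -
  have R: "sm (Rr v) = - sm v" "Dg (Rr v) = Dg v" "cD (Rr v) = cD v"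
    by (simp add: sm_R, simp add: Dg_R, simp add: cD_def Rr_def max.commute)
  have L: "sm v = 0 \<Longrightarrow> \<not> Dg v" using Lt_sm Dg_def by blast
  show ?thesis unfolding fe_h ev_def
  proof
    fix x
    consider "sm v > 0" | "sm v < 0" | "sm v = 0" by linarith
    then show "even (Poly_Mapping.lookup (g2 s v + frag_cmul s (g2 s (Rr v)) - G2 s v) x)"
    proof cases
      case 1
      then show ?thesis using s R
        by (auto simp: g2_def G2_def lookup_add lookup_minus)
    next
      case 2
      then show ?thesis using s R
        by (auto simp: g2_def G2_def lookup_add lookup_minus)
    next
      case 3
      then show ?thesis using s R L Rr_fix[of v]
        by (auto simp: g2_def G2_def lookup_add lookup_minus)
    qed
  qed
qed



lemma Kzero1: "frag_extend (g1 (sg n)) (Kgen n \<alpha> \<beta>) = 0"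
  using A1[OF sg_cases[of n]] G1_M by (simp add: Kgen_h frag_extend_diff)

lemma Kzero2: "ev (frag_extend (g2 (sg n)) (Kgen n \<alpha> \<beta>))"
proof -
  let ?s = "sg n" and ?v = "(\<alpha>-\<beta>,-\<beta>)"
  have "frag_extend (g2 ?s) (Kgen n \<alpha> \<beta>) =
        (frag_extend (g2 ?s) (h ?s ?v) - G2 ?s ?v) - (frag_extend (g2 ?s) (h ?s (Mm ?v)) - G2 ?s (Mm ?v))"
    by (simp add: Kgen_h frag_extend_diff G2_M)
  then show ?thesis using A2[OF sg_cases[of n]] ev_diff by metis
qed

definition oddset :: "('a \<Rightarrow>\<^sub>0 int) \<Rightarrow> 'a set" where
  "oddset z = {t. odd (Poly_Mapping.lookup z t)}"

definition Phi :: "int \<Rightarrow> (pt \<Rightarrow>\<^sub>0 int) \<Rightarrow> ((pt \<Rightarrow>\<^sub>0 int) set \<Rightarrow>\<^sub>0 int) \<times> (pt \<Rightarrow>\<^sub>0 int) set" where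
  "Phi s x = (frag_extend (g1 s) x, oddset (frag_extend (g2 s) x))"

definition SS :: "int \<Rightarrow> (pt \<Rightarrow>\<^sub>0 int) set set" where
  "SS s = (\<lambda>u. tg 1 {u}) ` {u. sm u > 0} \<union> (\<lambda>p. tg 2 (Dorb p)) ` {p. s = 1 \<or> Qf p \<noteq> 0}
          \<union> (\<lambda>w. tg 3 {w}) ` {w. s \<noteq> 1 \<and> sm w = 0}"

definition Tb :: "int \<Rightarrow> (pt \<Rightarrow>\<^sub>0 int) set" where
  "Tb s = (if s = 1 then frag_of ` {w. sm w = 0 \<and> fst w > 0} else (\<lambda>c. frag_of (c,c)) ` {c. c > 0})"

definition symd :: "'a set \<Rightarrow> 'a set \<Rightarrow> 'a set" where "symd X Y = (X - Y) \<union> (Y - X)"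

definition TT :: "int \<Rightarrow> (pt \<Rightarrow>\<^sub>0 int) set monoid" where
  "TT s = \<lparr>carrier = {X. finite X \<and> X \<subseteq> Tb s}, monoid.mult = symd, one = {}\<rparr>"

lemma TT_comm_group: "comm_group (TT s)"
proof -
  have "group (TT s)"
    by (rule groupI) (auto simp: TT_def symd_def intro!: exI[where x=x for x])
  then show ?thesis
    by (rule group.group_comm_groupI) (auto simp: TT_def symd_def)
qed

lemma TT_sq: "x \<in> carrier (TT s) \<Longrightarrow> x \<otimes>\<^bsub>TT s\<^esub> x = \<one>\<^bsub>TT s\<^esub>"
  by (simp add: TT_def symd_def)

lemma oddset_add: "oddset (a + b) = symd (oddset a) (oddset b)"
  by (auto simp: oddset_def symd_def lookup_add)

lemma oddset_diff: "oddset (a - b) = symd (oddset a) (oddset b)"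
  by (auto simp: oddset_def symd_def lookup_minus)

lemma oddset_keys: "oddset z \<subseteq> Poly_Mapping.keys z"
  by (auto simp: oddset_def in_keys_iff)

lemma oddset_ev: "oddset z = {} \<longleftrightarrow> ev z"
  by (auto simp: oddset_def ev_def)

lemma keys_cmul_of: "Poly_Mapping.keys (frag_cmul c (frag_of X)) \<subseteq> {X}"
  using keys_cmul[of c "frag_of X"] by (simp add: keys_frag_of)

lemma keys_g1: assumes s: "s = 1 \<or> s = -1" shows "Poly_Mapping.keys (g1 s p) \<subseteq> SS s"
proof -
  have gC: "Poly_Mapping.keys (gC s p) \<subseteq> SS s"
  proof -
    have "Poly_Mapping.keys (gC s p) \<subseteq> (if s = 1 \<or> Qf p \<noteq> 0 then {tg 2 (Dorb p)} else {})
           \<union> (if s \<noteq> 1 \<and> sm p = 0 then {tg 3 {p}} else {})"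
      using s free_iff[of p] keys_cmul_of
      by (auto simp: gC_def keys_frag_of)
    also have "\<dots> \<subseteq> SS s" unfolding SS_def by (auto intro: imageI)
    finally show ?thesis .
  qed
  have "sm (Rr p) = - sm p" by (rule sm_R)
  then have "sm p < 0 \<Longrightarrow> tg 1 {Rr p} \<in> SS s" unfolding SS_def by (auto intro: imageI)
  moreover have "sm p > 0 \<Longrightarrow> tg 1 {p} \<in> SS s" unfolding SS_def by (auto intro: imageI)
  ultimately show ?thesis using gC keys_cmul_of[of "-s" "tg 1 {Rr p}"] keys_add[of _ "gC s p"]
    by (auto simp: g1_def keys_frag_of)
qed

lemma keys_g2: assumes s: "s = 1 \<or> s = -1" shows "Poly_Mapping.keys (g2 s p) \<subseteq> Tb s"
proof -
  have "Dg p \<Longrightarrow> cD p > 0" using Dg_nz[of p] by (cases p) (auto simp: cD_def)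
  then show ?thesis using s unfolding g2_def Tb_def by (auto simp: keys_frag_of intro: imageI)
qed

lemma Phi_carrier: assumes s: "s = 1 \<or> s = -1"
  shows "Phi s x \<in> carrier (free_Abelian_group (SS s) \<times>\<times> TT s)"
proof -
  have 1: "Poly_Mapping.keys (frag_extend (g1 s) x) \<subseteq> SS s"
    using keys_frag_extend[of "g1 s" x] keys_g1[OF s] by blast
  have "oddset (frag_extend (g2 s) x) \<subseteq> Poly_Mapping.keys (frag_extend (g2 s) x)" by (rule oddset_keys)
  moreover have "Poly_Mapping.keys (frag_extend (g2 s) x) \<subseteq> Tb s"
    using keys_frag_extend[of "g2 s" x] keys_g2[OF s] by blast
  ultimately have 2: "finite (oddset (frag_extend (g2 s) x))" "oddset (frag_extend (g2 s) x) \<subseteq> Tb s"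
    using finite_subset[OF _ finite_keys] by blast+
  show ?thesis using 1 2 by (simp add: Phi_def TT_def)
qed

lemma Phi_add: "Phi s (x + y) = Phi s x \<otimes>\<^bsub>free_Abelian_group (SS s) \<times>\<times> TT s\<^esub> Phi s y"
  by (simp add: Phi_def frag_extend_add oddset_add TT_def)

lemma Phi_diff: "Phi s (x - y) = (fst (Phi s x) - fst (Phi s y), symd (snd (Phi s x)) (snd (Phi s y)))"
  by (simp add: Phi_def frag_extend_diff oddset_diff)

lemma Phi_hom: assumes s: "s = 1 \<or> s = -1"
  shows "group_hom LaurentA (free_Abelian_group (SS s) \<times>\<times> TT s) (Phi s)"
proof -
  have "group (free_Abelian_group (SS s) \<times>\<times> TT s)"
    using DirProd_group[OF group_free_Abelian_group comm_group.axioms(2)[OF TT_comm_group]] .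
  moreover have "Phi s \<in> hom LaurentA (free_Abelian_group (SS s) \<times>\<times> TT s)"
    using Phi_carrier[OF s] by (intro homI) (auto simp: Phi_add LaurentA_def simp del: carrier_DirProd)
  ultimately show ?thesis
    by (simp add: group_hom_def group_hom_axioms_def LaurentA_group)
qed



definition neg :: "pt \<Rightarrow> pt" where "neg p = (- fst p, - snd p)"

lemma neg_Morb: "neg p \<in> Morb p"
proof -
  have "Mm (Mm (Mm p)) = neg p" by (cases p) (simp add: Mm_simp neg_def)
  then show ?thesis unfolding Morb_def by auto
qed

lemma neg_Dorb: "neg p \<in> Dorb p" using neg_Morb Dorb_Morb by blast
lemma Rr_Dorb: "Rr p \<in> Dorb p" using Dorb_Morb[of p] unfolding Morb_def by blast
lemma sm_neg: "sm (neg p) = - sm p" by (simp add: sm_def neg_def)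

lemma E_F: assumes "Qf p \<noteq> 0" shows "\<exists>q\<in>Dorb p. sm q < 0 \<and> Qf q > 0"
proof -
  have sm: "sm p \<noteq> 0" using assms free_iff Lt_sm by blast
  have Qn: "Qf (neg p) = Qf p" using Morb_props[OF neg_Morb] by simp
  have Qr: "Qf (Rr p) = - Qf p" by (rule Qf_R)
  have Qnr: "Qf (neg (Rr p)) = - Qf p" using Morb_props[OF neg_Morb[of "Rr p"]] Qr by simp
  have D: "neg (Rr p) \<in> Dorb p" using neg_Dorb[of "Rr p"] Dorb_R by simp
  show ?thesis
  proof (cases "Qf p > 0")
    case True
    show ?thesis
    proof (cases "sm p < 0")
      case True with \<open>Qf p > 0\<close> show ?thesis using Dorb_self[of p] by blast
    next
      case False
      then have "sm (neg p) < 0" using sm sm_neg[of p] by simp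
      then show ?thesis using neg_Dorb[of p] Qn \<open>Qf p > 0\<close> by auto
    qed
  next
    case False
    then have Q: "Qf p < 0" using assms by simp
    show ?thesis
    proof (cases "sm p > 0")
      case True
      then have "sm (Rr p) < 0" using sm_R[of p] by simp
      then show ?thesis using Rr_Dorb[of p] Qr Q by auto
    next
      case False
      then have "sm (neg (Rr p)) < 0" using sm sm_neg[of "Rr p"] sm_R[of p] by simp
      then show ?thesis using D Qnr Q by auto
    qed
  qed
qed

lemma E_D: assumes "Dg p" shows "\<exists>q\<in>Dorb p. sm q < 0 \<and> Qf q = 0"
proof -
  have sm: "sm p \<noteq> 0" using assms Dg_def Lt_sm by blast
  have Dn: "Dg (neg p)" using assms Morb_props[OF neg_Morb[of p]] by simp
  have "Qf p = 0" "Qf (neg p) = 0" using assms Dn free_iff by blast+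
  show ?thesis
  proof (cases "sm p < 0")
    case True then show ?thesis using Dorb_self[of p] \<open>Qf p = 0\<close> by blast
  next
    case False
    then have "sm (neg p) < 0" using sm sm_neg[of p] by simp
    then show ?thesis using neg_Dorb[of p] \<open>Qf (neg p) = 0\<close> by blast
  qed
qed

lemma E_L: assumes "Lt p" shows "\<exists>w\<in>Dorb p. sm w = 0 \<and> fst w \<le> 0"
proof -
  have M: "p \<in> Dorb p" "Mm p \<in> Dorb p" "Mm (Mm p) \<in> Dorb p"
    unfolding Dorb_Morb Morb_def by blast+
  obtain a b where p: "p = (a,b)" by (cases p)
  from assms p have "a + b = 0 \<or> 2*a - b = 0 \<or> a - 2*b = 0" by (simp add: Lt_def sm_def)
  then have "sm p = 0 \<or> sm (Mm p) = 0 \<or> sm (Mm (Mm p)) = 0"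
    using p by (auto simp: sm_def Mm_simp)
  then obtain w where w: "w \<in> Dorb p" "sm w = 0" using M by blast
  show ?thesis
  proof (cases "fst w \<le> 0")
    case True then show ?thesis using w by blast
  next
    case False
    have "neg w \<in> Dorb p" using neg_Dorb[of w] Dorb_mem[OF w(1)] by simp
    moreover have "sm (neg w) = 0" "fst (neg w) \<le> 0" using w False sm_neg[of w] by (auto simp: neg_def)
    ultimately show ?thesis by blast
  qed
qed

lemma U_L: assumes "sm p = 0" "w \<in> Dorb p" "sm w = 0" shows "w = p \<or> w = neg p"
proof -
  obtain a b where p: "p = (a,b)" by (cases p)
  then have b: "b = -a" using assms(1) by (simp add: sm_def)
  from assms(2) p have "w = (a,b) \<or> w = (a-b,a) \<or> w = (-b,a-b) \<or> w = (-a,-b) \<or> w = (b-a,-a) \<or> w = (b,b-a) \<or>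
      w = (-b,-a) \<or> w = (-a,b-a) \<or> w = (b-a,b) \<or> w = (b,a) \<or> w = (a,a-b) \<or> w = (a-b,-b)"
    by (simp add: Dorb_def)
  then show ?thesis using assms(3) p b by (elim disjE) (simp_all add: sm_def neg_def)
qed

lemma D_rep: assumes "Dg p" "sm p < 0" shows "(- cD p, - cD p) \<in> Dorb p"
proof -
  obtain a b where p: "p = (a,b)" by (cases p)
  from assms p have "a * b * (a - b) = 0" "a + b < 0" by (auto simp: Dg_def sm_def)
  then have "a = 0 \<or> b = 0 \<or> a = b" by auto
  then show ?thesis
  proof (elim disjE)
    assume "a = 0" then have "cD p = - b" using p \<open>a+b<0\<close> by (simp add: cD_def)
    then show ?thesis using p \<open>a = 0\<close> by (simp add: Dorb_def)
  next
    assume "b = 0" then have "cD p = - a" using p \<open>a+b<0\<close> by (simp add: cD_def)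
    then show ?thesis using p \<open>b = 0\<close> by (simp add: Dorb_def)
  next
    assume "a = b" then have "cD p = - a" using p \<open>a+b<0\<close> by (simp add: cD_def)
    then show ?thesis using p \<open>a = b\<close> by (simp add: Dorb_def)
  qed
qed



definition r2 :: "int \<Rightarrow> pt set \<Rightarrow> (pt \<Rightarrow>\<^sub>0 int)" where
  "r2 s D = (if s = 1 \<and> (\<exists>p\<in>D. Lt p) then frag_of (SOME w. w \<in> D \<and> sm w = 0 \<and> fst w \<le> 0)
             else h s (SOME q. q \<in> D \<and> sm q < 0 \<and> Qf q \<ge> 0))"

definition rr :: "int \<Rightarrow> (pt \<Rightarrow>\<^sub>0 int) set \<Rightarrow> (pt \<Rightarrow>\<^sub>0 int)" where
  "rr s b = (if pts 1 b \<noteq> {} then frag_of (SOME u. u \<in> pts 1 b)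
             else if pts 2 b \<noteq> {} then r2 s (pts 2 b)
             else if pts 3 b \<noteq> {} then frag_of (SOME w. w \<in> pts 3 b) else 0)"

lemma rr1: "rr s (tg 1 {u}) = frag_of u" by (simp add: rr_def pts_tg)
lemma rr2: "D \<noteq> {} \<Longrightarrow> rr s (tg 2 D) = r2 s D" by (simp add: rr_def pts_tg)
lemma rr3: "rr s (tg 3 {u}) = frag_of u" by (simp add: rr_def pts_tg)

definition tau0 :: "int \<Rightarrow> pt \<Rightarrow> (pt \<Rightarrow>\<^sub>0 int)" where
  "tau0 s w = (if s = 1 then (if sm w = 0 \<and> fst w > 0 then frag_of w - frag_of (neg w) else 0)
               else (if fst w = snd w \<and> fst w > 0 then h s (neg w) else 0))"

definition tau :: "int \<Rightarrow> (pt \<Rightarrow>\<^sub>0 int) \<Rightarrow> (pt \<Rightarrow>\<^sub>0 int)" where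
  "tau s t = frag_extend (tau0 s) t"

definition Lmap :: "int \<Rightarrow> (pt \<Rightarrow>\<^sub>0 int) \<Rightarrow> (pt \<Rightarrow>\<^sub>0 int)" where
  "Lmap s x = frag_extend (rr s) (frag_extend (g1 s) x) + frag_extend (tau s) (frag_extend (g2 s) x)"

lemma fe_cmul_of: "frag_extend f (frag_cmul c (frag_of X)) = frag_cmul c (f X)"
  by (simp add: frag_extend_cmul)

lemma Dorb_ne: "Dorb p \<noteq> {}" using Dorb_self by blast

lemma Lt_Dorb: "(\<exists>q\<in>Dorb p. Lt q) \<longleftrightarrow> Lt p"
  using Dorb_props Dorb_self by blast

lemma h_fix1: "sm w = 0 \<Longrightarrow> h 1 w = frag_cmul 2 (frag_of w)"
  by (rule poly_mapping_eqI) (simp add: h_def Rr_fix lookup_add)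

lemma h_fixm: "sm w = 0 \<Longrightarrow> h (-1) w = 0"
  by (simp add: h_def Rr_fix)

lemma K_h_Dorb1: assumes "q \<in> Dorb p" "sg n = 1" shows "h (sg n) q - h (sg n) p \<in> Ksub n"
  using K_h_Dorb[OF assms(1), of n] assms(2) by auto

lemma K_h_Dorb2: assumes "q \<in> Dorb p" "sg n = -1"
  shows "h (sg n) q - h (sg n) p \<in> Ksub n \<or> h (sg n) q + h (sg n) p \<in> Ksub n"
  using K_h_Dorb[OF assms(1), of n] assms(2) by auto

lemma K_2h_diag: assumes "sg n = -1" "fst q = snd q" shows "frag_cmul 2 (h (sg n) q) \<in> Ksub n"
proof -
  have "Rr q = neg q" using assms(2) by (cases q) (simp add: neg_def Rr_simp)
  then have "Rr q \<in> Morb q" using neg_Morb by simp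
  then have "h (sg n) (Rr q) - h (sg n) q \<in> Ksub n" by (rule K_h_Morb)
  moreover have "h (sg n) (Rr q) = - h (sg n) q" using h_R[of n q] assms(1) by simp
  moreover have "- h (sg n) q - h (sg n) q = - frag_cmul 2 (h (sg n) q)"
    by (rule poly_mapping_eqI) (simp add: lookup_minus)
  ultimately have "- frag_cmul 2 (h (sg n) q) \<in> Ksub n" by metis
  then show ?thesis using K_uminus by fastforce
qed



lemma frag_cmul_neg: "frag_cmul (-s) Y = - frag_cmul s Y" by simp

lemma frag_cmul_sq: "s * s = 1 \<Longrightarrow> frag_cmul s (frag_cmul s Y) = Y" by simp

lemma iva_neg:
  assumes s: "s = sg n" and smp: "sm p < 0"
  shows "h s p - (frag_extend (rr s) (gC s p) + frag_extend (tau s) (g2 s p)) \<in> Ksub n"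
proof -
  have ss: "s = 1 \<or> s = -1" using s sg_cases by blast
  have nLt: "sm p \<noteq> 0" using smp by simp
  consider "Lt p" | "Dg p" | "Qf p \<noteq> 0" using free_iff by blast
  then show ?thesis
  proof cases
    case 1
    then have nDg: "\<not> Dg p" by (simp add: Dg_def)
    have g20: "g2 s p = 0" using ss nLt nDg by (auto simp: g2_def)
    show ?thesis
    proof (cases "s = 1")
      case True
      obtain w0 where w0: "w0 = (SOME w. w \<in> Dorb p \<and> sm w = 0 \<and> fst w \<le> 0)" by blast
      have w0p: "w0 \<in> Dorb p \<and> sm w0 = 0 \<and> fst w0 \<le> 0"
        unfolding w0 by (rule someI_ex) (use E_L[OF 1] in blast)
      have C: "frag_extend (rr s) (gC s p) = frag_cmul 2 (frag_of w0)"
        using True 1 nLt by (simp add: gC_def fe_cmul_of rr2 Dorb_ne r2_def Lt_Dorb w0[symmetric])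
      have "h s w0 - h s p \<in> Ksub n" using K_h_Dorb1[of w0 p n] w0p s True by simp
      moreover have "h s w0 = frag_cmul 2 (frag_of w0)" using True h_fix1 w0p by simp
      ultimately show ?thesis using C g20 K_uminus by fastforce
    next
      case False
      then have sm1: "s = -1" using ss by simp
      have C: "gC s p = 0" using sm1 1 nLt by (simp add: gC_def)
      obtain w where w: "w \<in> Dorb p" "sm w = 0" using E_L[OF 1] by blast
      have "h s w = 0" using sm1 h_fixm w by simp
      then have "- h s p \<in> Ksub n \<or> h s p \<in> Ksub n" using K_h_Dorb2[OF w(1), of n] s sm1 by simp
      then have "h s p \<in> Ksub n" using K_uminus by fastforce
      then show ?thesis using C g20 by simp
    qed
  next
    case 2
    then have nLtp: "\<not> Lt p" by (simp add: Dg_def)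
    show ?thesis
    proof (cases "s = 1")
      case True
      have g20: "g2 s p = 0" using True nLt by (auto simp: g2_def)
      obtain q0 where q0: "q0 = (SOME q. q \<in> Dorb p \<and> sm q < 0 \<and> Qf q \<ge> 0)" by blast
      have q0p: "q0 \<in> Dorb p \<and> sm q0 < 0 \<and> Qf q0 \<ge> 0"
        unfolding q0 by (rule someI_ex) (use E_D[OF 2] in force)
      have C: "frag_extend (rr s) (gC s p) = h s q0"
        using True 2 nLtp by (simp add: gC_def rr2 Dorb_ne r2_def Lt_Dorb q0[symmetric])
      have "h s q0 - h s p \<in> Ksub n" using K_h_Dorb1[of q0 p n] q0p s True by simp
      then show ?thesis using C g20 K_uminus by fastforce
    next
      case False
      then have sm1: "s = -1" using ss by simp
      have C: "gC s p = 0" using sm1 2 nLtp by (simp add: gC_def)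
      define c where "c = cD p"
      have cpos: "c > 0" using Dg_nz[OF 2] unfolding c_def by (cases p) (auto simp: cD_def)
      have g2: "g2 s p = frag_of (frag_of (c,c))" using sm1 2 smp by (simp add: g2_def c_def)
      have T: "frag_extend (tau s) (g2 s p) = h s (-c,-c)"
        using g2 cpos sm1 by (simp add: tau_def tau0_def neg_def)
      have qD: "(-c,-c) \<in> Dorb p" using D_rep[OF 2 smp] c_def by simp
      have 2: "frag_cmul 2 (h s (-c,-c)) \<in> Ksub n" using K_2h_diag[of n "(-c,-c)"] s sm1 by simp
      from K_h_Dorb2[OF qD, of n] s sm1
      have "h s (-c,-c) - h s p \<in> Ksub n \<or> h s (-c,-c) + h s p \<in> Ksub n" by simp
      then have "h s p - h s (-c,-c) \<in> Ksub n"
      proof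
        assume "h s (-c,-c) - h s p \<in> Ksub n" then show ?thesis using K_uminus by fastforce
      next
        assume a: "h s (-c,-c) + h s p \<in> Ksub n"
        have eq: "h s p - h s (-c,-c) = (h s (-c,-c) + h s p) - frag_cmul 2 (h s (-c,-c))"
          by (rule poly_mapping_eqI) (simp add: lookup_add lookup_minus)
        show ?thesis by (subst eq) (rule K_diff[OF a 2])
      qed
      then show ?thesis using C T by simp
    qed
  next
    case 3
    then have nLtp: "\<not> Lt p" and nDg: "\<not> Dg p" using free_iff by auto
    have g20: "g2 s p = 0" using ss nLt nDg by (auto simp: g2_def)
    obtain q0 where q0: "q0 = (SOME q. q \<in> Dorb p \<and> sm q < 0 \<and> Qf q \<ge> 0)" by blast
    have q0p: "q0 \<in> Dorb p \<and> sm q0 < 0 \<and> Qf q0 \<ge> 0"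
      unfolding q0 by (rule someI_ex) (use E_F[OF 3] in force)
    define \<epsilon> where "\<epsilon> = (if Qf p > 0 then 1 else s)"
    have C: "frag_extend (rr s) (gC s p) = frag_cmul \<epsilon> (h s q0)"
      using nLtp nDg by (simp add: gC_def fe_cmul_of rr2 Dorb_ne r2_def Lt_Dorb q0[symmetric] \<epsilon>_def)
    from K_h_Dorb[OF conjunct1[OF q0p], of n] s
    have "(Qf q0 = Qf p \<and> h s q0 - h s p \<in> Ksub n) \<or>
          (Qf q0 = - Qf p \<and> h s q0 - frag_cmul s (h s p) \<in> Ksub n)" by simp
    then have "h s p - frag_cmul \<epsilon> (h s q0) \<in> Ksub n"
    proof
      assume a: "Qf q0 = Qf p \<and> h s q0 - h s p \<in> Ksub n"
      then have "\<epsilon> = 1" using q0p 3 \<epsilon>_def by simp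
      then show ?thesis using a K_uminus by fastforce
    next
      assume a: "Qf q0 = - Qf p \<and> h s q0 - frag_cmul s (h s p) \<in> Ksub n"
      then have e: "\<epsilon> = s" using q0p 3 \<epsilon>_def by auto
      have "frag_cmul (-s) (h s q0 - frag_cmul s (h s p)) \<in> Ksub n" using a K_cmul by blast
      moreover have "frag_cmul (-s) (h s q0 - frag_cmul s (h s p)) = h s p - frag_cmul s (h s q0)"
        using ss by (intro poly_mapping_eqI) (auto simp: lookup_minus)
      ultimately show ?thesis using e by simp
    qed
    then show ?thesis using C g20 by simp
  qed
qed

lemma iva: "frag_of p - Lmap (sg n) (frag_of p) \<in> Ksub n"
proof -
  define s where "s = sg n"
  have ss: "s = 1 \<or> s = -1" using s_def sg_cases by blast
  have Lm: "Lmap s (frag_of p) = frag_extend (rr s) (g1 s p) + frag_extend (tau s) (g2 s p)"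
    by (simp add: Lmap_def)
  consider "sm p > 0" | "sm p < 0" | "sm p = 0" by linarith
  then have "frag_of p - Lmap s (frag_of p) \<in> Ksub n"
  proof cases
    case 1
    have "g2 s p = 0" using 1 ss by (auto simp: g2_def)
    then have "Lmap s (frag_of p) = frag_of p" using 1 by (simp add: Lm g1_def rr1)
    then show ?thesis by (simp add: K_zero)
  next
    case 2
    let ?C = "frag_extend (rr s) (gC s p)" and ?T = "frag_extend (tau s) (g2 s p)"
    have "Lmap s (frag_of p) = frag_cmul (-s) (frag_of (Rr p)) + (?C + ?T)"
      using 2 by (simp add: Lm g1_def frag_extend_add fe_cmul_of rr1 del: minus_frag_cmul)
    then have "frag_of p - Lmap s (frag_of p) = h s p - (?C + ?T)"
      by (intro poly_mapping_eqI) (simp add: h_def lookup_add lookup_minus del: minus_frag_cmul)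
    then show ?thesis using iva_neg[OF s_def 2] by simp
  next
    case 3
    then have Ltp: "Lt p" by (rule Lt_sm)
    show ?thesis
    proof (cases "s = 1")
      case True
      obtain w0 where w0: "w0 = (SOME w. w \<in> Dorb p \<and> sm w = 0 \<and> fst w \<le> 0)" by blast
      have w0p: "w0 \<in> Dorb p \<and> sm w0 = 0 \<and> fst w0 \<le> 0"
        unfolding w0 by (rule someI_ex) (use E_L[OF Ltp] in blast)
      have C: "frag_extend (rr s) (g1 s p) = frag_of w0"
        using True Ltp 3 by (simp add: g1_def gC_def rr2 Dorb_ne r2_def Lt_Dorb w0[symmetric])
      have U: "w0 = p \<or> w0 = neg p" using U_L[OF 3] w0p by blast
      show ?thesis
      proof (cases "fst p > 0")
        case True
        then have "w0 = neg p" using U w0p by auto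
        moreover have "frag_extend (tau s) (g2 s p) = frag_of p - frag_of (neg p)"
          using True \<open>s = 1\<close> 3 by (simp add: g2_def tau_def tau0_def)
        ultimately show ?thesis using C Lm by (simp add: K_zero)
      next
        case False
        have "w0 = p"
        proof (rule ccontr)
          assume "w0 \<noteq> p"
          then have "w0 = neg p" using U by simp
          then have "fst p = 0" using w0p False by (simp add: neg_def)
          then have "p = neg p" using 3 by (cases p) (simp add: sm_def neg_def)
          then show False using \<open>w0 \<noteq> p\<close> \<open>w0 = neg p\<close> by simp
        qed
        moreover have "g2 s p = 0" using False \<open>s = 1\<close> by (simp add: g2_def)
        ultimately show ?thesis using C Lm by (simp add: K_zero)
      qed
    next
      case False
      then have sm1: "s = -1" using ss by simp
      have "g2 s p = 0" using sm1 3 by (simp add: g2_def)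
      moreover have "frag_extend (rr s) (g1 s p) = frag_of p"
        using sm1 Ltp 3 by (simp add: g1_def gC_def rr3)
      ultimately show ?thesis using Lm by (simp add: K_zero)
    qed
  qed
  then show ?thesis by (simp add: s_def)
qed

lemma Lmap_diff: "Lmap s (a - b) = Lmap s a - Lmap s b"
  by (simp add: Lmap_def frag_extend_diff)

lemma ivb: "x - Lmap (sg n) x \<in> Ksub n"
proof -
  have "Poly_Mapping.keys x \<subseteq> UNIV" by simp
  then show ?thesis
  proof (induction x rule: frag_induction)
    case zero then show ?case by (simp add: Lmap_def K_zero)
  next
    case (one x) show ?case by (rule iva)
  next
    case (diff a b)
    have eq: "a - b - Lmap (sg n) (a - b) = (a - Lmap (sg n) a) - (b - Lmap (sg n) b)"
      by (simp add: Lmap_diff)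
    show ?case by (subst eq) (rule K_diff[OF diff.IH])
  qed
qed

lemma frag_cmul_extend: "frag_cmul c (frag_extend f t) = frag_extend (\<lambda>w. frag_cmul c (f w)) t"
  by (simp add: frag_extend_def frag_cmul_sum mult.commute)

lemma K_2tau0: "frag_cmul 2 (tau0 (sg n) w) \<in> Ksub n"
proof (cases "sg n = 1")
  case True
  show ?thesis
  proof (cases "sm w = 0 \<and> fst w > 0")
    case c: True
    have sn: "sm (neg w) = 0" using c sm_neg[of w] by simp
    have "h (sg n) (neg w) - h (sg n) w \<in> Ksub n" using K_h_Morb[OF neg_Morb] .
    then have "- (h (sg n) (neg w) - h (sg n) w) \<in> Ksub n" by (rule K_uminus)
    moreover have "- (h (sg n) (neg w) - h (sg n) w) = frag_cmul 2 (tau0 (sg n) w)"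
      using True c sn by (simp add: tau0_def h_fix1 frag_cmul_diff_distrib2)
    ultimately show ?thesis by simp
  next
    case False then show ?thesis using True by (auto simp: tau0_def K_zero)
  qed
next
  case False
  then have sm1: "sg n = -1" using sg_cases by metis
  show ?thesis
  proof (cases "fst w = snd w \<and> fst w > 0")
    case True
    then have "fst (neg w) = snd (neg w)" by (simp add: neg_def)
    then show ?thesis using K_2h_diag[OF sm1] True sm1 by (simp add: tau0_def)
  next
    case c: False then show ?thesis using sm1 by (auto simp: tau0_def K_zero)
  qed
qed

lemma ivc: assumes "ev z" shows "frag_extend (tau (sg n)) z \<in> Ksub n"
proof -
  have 2: "frag_cmul 2 (tau (sg n) t) \<in> Ksub n" for t
    unfolding tau_def frag_cmul_extend by (rule K_frag_extend) (rule K_2tau0)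
  have "frag_cmul (Poly_Mapping.lookup z t) (tau (sg n) t) \<in> Ksub n" for t
  proof -
    have "Poly_Mapping.lookup z t = (Poly_Mapping.lookup z t div 2) * 2"
      using assms by (simp add: ev_def)
    then have "frag_cmul (Poly_Mapping.lookup z t) (tau (sg n) t)
             = frag_cmul (Poly_Mapping.lookup z t div 2) (frag_cmul 2 (tau (sg n) t))"
      by (metis frag_cmul_cmul)
    then show ?thesis using K_cmul[OF 2] by simp
  qed
  then show ?thesis unfolding frag_extend_def by (intro K_sum) auto
qed

lemma ker_sub: assumes "Phi (sg n) x = (0, {})" shows "x \<in> Ksub n"
proof -
  have 1: "frag_extend (g1 (sg n)) x = 0" and 2: "ev (frag_extend (g2 (sg n)) x)"
    using assms oddset_ev by (auto simp: Phi_def)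
  have "Lmap (sg n) x \<in> Ksub n" using ivc[OF 2] 1 by (simp add: Lmap_def)
  moreover have "x = (x - Lmap (sg n) x) + Lmap (sg n) x" by simp
  ultimately show ?thesis using K_add[OF ivb] by metis
qed



lemma oddset_ev_eq: "ev (X - G) \<Longrightarrow> oddset X = oddset G"
  by (auto simp: ev_def oddset_def lookup_minus)

lemma oddset_of: "oddset (frag_of t) = {t}" by (auto simp: oddset_def)
lemma oddset_0: "oddset 0 = {}" by (auto simp: oddset_def)

lemma Phi_h: assumes "s = 1 \<or> s = -1" shows "Phi s (h s q) = (G1 s q, oddset (G2 s q))"
  using A1[OF assms] oddset_ev_eq[OF A2[OF assms]] by (simp add: Phi_def)

lemma Phi_of: "Phi s (frag_of p) = (g1 s p, oddset (g2 s p))" by (simp add: Phi_def)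

lemma Phi_add2: "Phi s (x + y) = (fst (Phi s x) + fst (Phi s y), symd (snd (Phi s x)) (snd (Phi s y)))"
  by (simp add: Phi_def frag_extend_add oddset_add)

lemma pre1: assumes s: "s = 1 \<or> s = -1" and b: "b \<in> SS s" shows "\<exists>y. Phi s y = (frag_of b, {})"
proof -
  consider (u) u where "b = tg 1 {u}" "sm u > 0"
    | (d) p where "b = tg 2 (Dorb p)" "s = 1 \<or> Qf p \<noteq> 0"
    | (w) w where "b = tg 3 {w}" "s \<noteq> 1" "sm w = 0"
    using b unfolding SS_def by blast
  then show ?thesis
  proof cases
    case u
    then have "g2 s u = 0" using s by (auto simp: g2_def)
    then show ?thesis using u by (intro exI[of _ "frag_of u"]) (simp add: Phi_of g1_def oddset_0)
  next
    case d
    show ?thesis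
    proof (cases "Qf p \<noteq> 0")
      case True
      obtain q where q: "q \<in> Dorb p" "sm q < 0" "Qf q > 0" using E_F[OF True] by blast
      have "\<not> Lt q" "\<not> Dg q" using free_iff[of q] q(3) by auto
      moreover have "Dorb q = Dorb p" using Dorb_mem[OF q(1)] .
      ultimately have "Phi s (h s q) = (frag_of b, {})"
        using q d s by (auto simp: Phi_h G1_def G2_def oddset_0)
      then show ?thesis by blast
    next
      case False
      then have s1: "s = 1" using d by simp
      have "Lt p \<or> Dg p" using False free_iff by blast
      then show ?thesis
      proof
        assume Lp: "Lt p"
        obtain w where w: "w \<in> Dorb p" "sm w = 0" "fst w \<le> 0" using E_L[OF Lp] by blast
        have "Lt w" using w(2) Lt_sm by blast
        moreover have "Dorb w = Dorb p" using Dorb_mem[OF w(1)] .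
        ultimately have "Phi s (frag_of w) = (frag_of b, {})"
          using w d s1 by (simp add: Phi_of g1_def gC_def g2_def oddset_0)
        then show ?thesis by blast
      next
        assume Dp: "Dg p"
        obtain q where q: "q \<in> Dorb p" "sm q < 0" using E_D[OF Dp] by blast
        have "Dg q" using Dorb_props[OF q(1)] Dp by simp
        then have "\<not> Lt q" by (simp add: Dg_def)
        moreover have "Dorb q = Dorb p" using Dorb_mem[OF q(1)] .
        ultimately have "Phi s (h s q) = (frag_of b, {})"
          using q d s1 \<open>Dg q\<close> by (simp add: Phi_h G1_def G2_def oddset_0)
        then show ?thesis by blast
      qed
    qed
  next
    case w
    then have "s = -1" using s by simp
    moreover have "Lt w" using w Lt_sm by blast
    ultimately have "Phi s (frag_of w) = (frag_of b, {})"
      using w by (simp add: Phi_of g1_def gC_def g2_def oddset_0)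
    then show ?thesis by blast
  qed
qed

lemma pre2: assumes s: "s = 1 \<or> s = -1" and t: "t \<in> Tb s" shows "\<exists>y. Phi s y = (0, {t})"
proof (cases "s = 1")
  case True
  then obtain w where w: "t = frag_of w" "sm w = 0" "fst w > 0" using t by (auto simp: Tb_def)
  have n: "sm (neg w) = 0" "fst (neg w) < 0" using w sm_neg[of w] by (auto simp: neg_def)
  have D: "Dorb (neg w) = Dorb w" using Dorb_mem[OF neg_Dorb] .
  have L: "Lt w" "Lt (neg w)" using w(2) n(1) Lt_sm by blast+
  have "Phi s (frag_of w - frag_of (neg w)) = (0, {t})"
    using True w n D L by (simp add: Phi_def frag_extend_diff g1_def gC_def g2_def oddset_of)
  then show ?thesis by blast
next
  case False
  then have sm1: "s = -1" using s by simp
  then obtain c where c: "t = frag_of (c,c)" "c > 0" using t by (auto simp: Tb_def)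
  have "Dg (-c,-c)" using c(2) by (simp add: Dg_def Lt_def sm_def)
  moreover have "cD (-c,-c) = c" using c(2) by (simp add: cD_def)
  ultimately have "Phi s (h s (-c,-c)) = (0, {t})"
    using sm1 c by (simp add: Phi_h G1_def G2_def Dg_def oddset_of)
  then show ?thesis by blast
qed

lemma Phi_0: "Phi s 0 = (0, {})" by (simp add: Phi_def oddset_0)

lemma surj1: assumes s: "s = 1 \<or> s = -1" and c: "Poly_Mapping.keys c \<subseteq> SS s"
  shows "\<exists>y. Phi s y = (c, {})"
proof (rule free_Abelian_group_induct[OF c, where P="\<lambda>c. \<exists>y. Phi s y = (c, {})"])
  show "\<exists>y. Phi s y = (0, {})" using Phi_0 by blast
next
  fix x y assume "\<exists>y. Phi s y = (x, {})" "\<exists>ya. Phi s ya = (y, {})"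
  then obtain a b where "Phi s a = (x, {})" "Phi s b = (y, {})" by blast
  then have "Phi s (a - b) = (x - y, {})" by (simp add: Phi_diff symd_def)
  then show "\<exists>ya. Phi s ya = (x - y, {})" by blast
next
  fix a assume "a \<in> SS s" then show "\<exists>y. Phi s y = (frag_of a, {})" using pre1[OF s] by blast
qed

lemma surj2: assumes s: "s = 1 \<or> s = -1" and X: "finite X" "X \<subseteq> Tb s"
  shows "\<exists>y. Phi s y = (0, X)"
  using X
proof (induction X rule: finite_induct)
  case empty then show ?case using Phi_0 by blast
next
  case (insert t X)
  then obtain a where a: "Phi s a = (0, X)" by blast
  obtain b where b: "Phi s b = (0, {t})" using pre2[OF s] insert by blast
  have "Phi s (a + b) = (0, insert t X)" using a b insert(2) by (auto simp: Phi_add2 symd_def)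
  then show ?case by blast
qed

lemma Phi_surj: assumes s: "s = 1 \<or> s = -1"
  shows "Phi s ` carrier LaurentA = carrier (free_Abelian_group (SS s) \<times>\<times> TT s)"
proof
  show "Phi s ` carrier LaurentA \<subseteq> carrier (free_Abelian_group (SS s) \<times>\<times> TT s)"
    using Phi_carrier[OF s] by blast
next
  show "carrier (free_Abelian_group (SS s) \<times>\<times> TT s) \<subseteq> Phi s ` carrier LaurentA"
  proof
    fix z assume "z \<in> carrier (free_Abelian_group (SS s) \<times>\<times> TT s)"
    then obtain c X where z: "z = (c, X)" "Poly_Mapping.keys c \<subseteq> SS s" "finite X" "X \<subseteq> Tb s"
      by (cases z) (auto simp: TT_def)
    obtain a where a: "Phi s a = (c, {})" using surj1[OF s z(2)] by blast
    obtain b where b: "Phi s b = (0, X)" using surj2[OF s z(3,4)] by blast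
    have "Phi s (a + b) = z" using a b z(1) by (simp add: Phi_add2 symd_def)
    then show "z \<in> Phi s ` carrier LaurentA" by force
  qed
qed

lemma kernel_eq: "kernel LaurentA (free_Abelian_group (SS (sg n)) \<times>\<times> TT (sg n)) (Phi (sg n)) = Ksub n"
proof
  show "kernel LaurentA (free_Abelian_group (SS (sg n)) \<times>\<times> TT (sg n)) (Phi (sg n)) \<subseteq> Ksub n"
    using ker_sub by (auto simp: kernel_def TT_def)
next
  interpret gh: group_hom LaurentA "free_Abelian_group (SS (sg n)) \<times>\<times> TT (sg n)" "Phi (sg n)"
    by (rule Phi_hom[OF sg_cases])
  have gens: "{Kgen n \<alpha> \<beta> | \<alpha> \<beta>. True} \<subseteq> kernel LaurentA (free_Abelian_group (SS (sg n)) \<times>\<times> TT (sg n)) (Phi (sg n))"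
  proof -
    have "Phi (sg n) (Kgen n \<alpha> \<beta>) = (0, {})" for \<alpha> \<beta>
      using Kzero1[of n \<alpha> \<beta>] oddset_ev[THEN iffD2, OF Kzero2[of n \<alpha> \<beta>]] unfolding Phi_def by simp
    then show ?thesis by (auto simp: kernel_def TT_def)
  qed
  show "Ksub n \<subseteq> kernel LaurentA (free_Abelian_group (SS (sg n)) \<times>\<times> TT (sg n)) (Phi (sg n))"
    unfolding Ksub_def by (rule group.generate_subgroup_incl[OF LaurentA_group gens gh.subgroup_kernel])
qed

theorem mainTheorem8:
  fixes n :: int
  shows "\<exists>(S :: (int \<times> int \<Rightarrow>\<^sub>0 int) set set) (T :: (int \<times> int \<Rightarrow>\<^sub>0 int) set monoid).
           comm_group T \<and>
           (\<forall>x \<in> carrier T. x \<otimes>\<^bsub>T\<^esub> x = \<one>\<^bsub>T\<^esub>) \<and>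
           (LaurentA Mod Ksub n) \<cong> (free_Abelian_group S \<times>\<times> T)"
proof -
  interpret gh: group_hom LaurentA "free_Abelian_group (SS (sg n)) \<times>\<times> TT (sg n)" "Phi (sg n)"
    by (rule Phi_hom[OF sg_cases])
  have "LaurentA Mod kernel LaurentA (free_Abelian_group (SS (sg n)) \<times>\<times> TT (sg n)) (Phi (sg n))
        \<cong> free_Abelian_group (SS (sg n)) \<times>\<times> TT (sg n)"
    by (rule gh.FactGroup_iso[OF Phi_surj[OF sg_cases]])
  then have "LaurentA Mod Ksub n \<cong> free_Abelian_group (SS (sg n)) \<times>\<times> TT (sg n)"
    by (simp add: kernel_eq)
  then show ?thesis using TT_comm_group TT_sq by blast
qed

end
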